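(* Let $S=\{(X_1,y_1),(X_2,y_2)\}\in\mathcal{S}_2$ be such that at least one principal angle between $\mathrm{range}(X_1^\top)$ and $\mathrm{range}(X_2^\top)$ is non-zero, and let $\theta_F$ be the smallest non-zero such principal angle (the Friedrichs angle). Under the cyclic ordering, after $k=2n$ iterations ($n\ge1$), $$\|w_k-w^\star\|^2\le(\cos^2\theta_F)^{k-1}\|w^\star\|^2 .$$ Moreover the bound is tight: for the given $X_1,X_2$ there exist labels $y_1,y_2$ with $S\in\mathcal{S}_2$ for which equality holds.
   Context: Let $d\ge 1$, $T\ge1$. A task is a pair $(X_m,y_m)$ with $X_m\in\mathbb{R}^{n_m\times d}$, $y_m\in\mathbb{R}^{n_m}$ and $\operatorname{rank}(X_m)<d$. $\mathcal{S}_T$ denotes the set of collections $S=\{(X_m,y_m)\}_{m=1}^T$ of $T$ tasks such that $\|X_m\|\le 1$ (spectral norm) for all $m$ and there exists $w\in\mathbb{R}^d$ with $\|w\|\le 1$ and $y_m=X_mw$ for all $m$. Given $S$ and an ordering $\tau:\mathbb{N}^+\to\{1,\dots,T\}$, the iterates are $w_0=0$ and $w_t=w_{t-1}+X_{\tau(t)}^+(y_{\tau(t)}-X_{\tau(t)}w_{t-1})$, with $A^+$ the Moore–Penrose pseudoinverse. The cyclic ordering is $\tau(t)=((t-1)\bmod T)+1$. $w^\star$ denotes the minimum Euclidean-norm vector with $X_mw^\star=y_m$ for all $m$. Principal angles: for data matrices $X_1,X_2$ let $r=\min(\operatorname{rank}X_1,\operatorname{rank}X_2)$. The principal angles $0\le\theta_1\le\dots\le\theta_r\le\pi/2$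 between $\mathrm{range}(X_1^\top)$ and $\mathrm{range}(X_2^\top)$ are defined recursively by $\cos\theta_i=|u_i^\top v_i|$, where $(u_i,v_i)$ maximizes $|u^\top v|$ over unit vectors $u\in\mathrm{range}(X_1^\top)$, $v\in\mathrm{range}(X_2^\top)$ with $u\perp u_j$, $v\perp v_j$ for all $j<i$. *)

theory Defs
  imports "HOL-Analysis.Analysis"
begin

definition pinv :: "real^'d^'n \<Rightarrow> real^'n^'d" where
  "pinv A = (THE B. A ** B ** A = A \<and> B ** A ** B = B \<and>
                    transpose (A ** B) = A ** B \<and> transpose (B ** A) = B ** A)"

definition spec_norm :: "real^'d^'n \<Rightarrow> real" where
  "spec_norm A = onorm (\<lambda>x. A *v x)"

definition is_task :: "real^'d^'n \<Rightarrow> real^'n \<Rightarrow> bool" where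
  "is_task X y \<longleftrightarrow> rank X < CARD('d)"

definition in_S2 :: "real^'d^'n1 \<Rightarrow> real^'n1 \<Rightarrow> real^'d^'n2 \<Rightarrow> real^'n2 \<Rightarrow> bool" where
  "in_S2 X1 y1 X2 y2 \<longleftrightarrow> is_task X1 y1 \<and> is_task X2 y2 \<and>
     spec_norm X1 \<le> 1 \<and> spec_norm X2 \<le> 1 \<and>
     (\<exists>w. norm w \<le> 1 \<and> y1 = X1 *v w \<and> y2 = X2 *v w)"

definition wstar :: "real^'d^'n1 \<Rightarrow> real^'n1 \<Rightarrow> real^'d^'n2 \<Rightarrow> real^'n2 \<Rightarrow> real^'d" where
  "wstar X1 y1 X2 y2 = (THE w. X1 *v w = y1 \<and> X2 *v w = y2 \<and>
      (\<forall>v. X1 *v v = y1 \<and> X2 *v v = y2 \<longrightarrow> norm w \<le> norm v))"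

definition proj_step :: "real^'d^'n \<Rightarrow> real^'n \<Rightarrow> real^'d \<Rightarrow> real^'d" where
  "proj_step X y w = w + pinv X *v (y - X *v w)"

text \<open>Iterates under the cyclic ordering with T = 2: w_0 = 0, and step t (t \<ge> 1)
  uses task tau(t) = ((t-1) mod 2) + 1.\<close>
fun cyc_iter :: "real^'d^'n1 \<Rightarrow> real^'n1 \<Rightarrow> real^'d^'n2 \<Rightarrow> real^'n2 \<Rightarrow> nat \<Rightarrow> real^'d" where
  "cyc_iter X1 y1 X2 y2 0 = 0"
| "cyc_iter X1 y1 X2 y2 (Suc t) =
     (if t mod 2 = 0 then proj_step X1 y1 (cyc_iter X1 y1 X2 y2 t)
      else proj_step X2 y2 (cyc_iter X1 y1 X2 y2 t))"

definition principal_vectors ::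
  "('a::real_inner) set \<Rightarrow> 'a set \<Rightarrow> nat \<Rightarrow> (nat \<Rightarrow> 'a) \<Rightarrow> (nat \<Rightarrow> 'a) \<Rightarrow> bool" where
  "principal_vectors U V r u v \<longleftrightarrow>
     (\<forall>i<r. u i \<in> U \<and> v i \<in> V \<and> norm (u i) = 1 \<and> norm (v i) = 1 \<and>
        (\<forall>j<i. u i \<bullet> u j = 0 \<and> v i \<bullet> v j = 0) \<and>
        (\<forall>x y. x \<in> U \<and> y \<in> V \<and> norm x = 1 \<and> norm y = 1 \<and>
               (\<forall>j<i. x \<bullet> u j = 0 \<and> y \<bullet> v j = 0) \<longrightarrow> \<bar>x \<bullet> y\<bar> \<le> \<bar>u i \<bullet> v i\<bar>))"

definition row_range :: "real^'d^'n \<Rightarrow> (real^'d) set" where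
  "row_range X = range (\<lambda>z. transpose X *v z)"

end

theory Submission
  imports Defs
begin


definition isproj :: "('a::real_inner \<Rightarrow> 'a) \<Rightarrow> 'a set \<Rightarrow> bool" where
  "isproj p S \<longleftrightarrow> (\<forall>x. p x \<in> S \<and> (\<forall>s\<in>S. (x - p x) \<bullet> s = 0))"

lemma inner_ext: fixes a b :: "'a::real_inner"
  assumes "\<And>y. a \<bullet> y = b \<bullet> y" shows "a = b"
proof -
  have "(a - b) \<bullet> (a - b) = 0" using assms[of "a-b"] by (simp add: inner_diff_left)
  thus ?thesis by simp
qed

lemma proj_exists: fixes S :: "'a::euclidean_space set"
  assumes "subspace S" shows "\<exists>p. isproj p S"
proof -
  have "\<forall>x. \<exists>y. y \<in> S \<and> (\<forall>s\<in>S. (x - y) \<bullet> s = 0)"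
  proof
    fix x
    have sS: "span S = S" using assms by (simp add: span_eq_iff)
    obtain y z where "y \<in> span S" "\<And>w. w \<in> span S \<Longrightarrow> orthogonal z w" "x = y + z"
      using orthogonal_subspace_decomp_exists by blast
    then show "\<exists>y. y \<in> S \<and> (\<forall>s\<in>S. (x - y) \<bullet> s = 0)"
      using sS by (intro exI[of _ y]) (auto simp: orthogonal_def)
  qed
  then show ?thesis unfolding isproj_def by metis
qed

lemma proj_unique: fixes S :: "'a::real_inner set"
  assumes "subspace S" "a \<in> S" "b \<in> S" "\<forall>s\<in>S. (x - a) \<bullet> s = 0" "\<forall>s\<in>S. (x - b) \<bullet> s = 0"
  shows "a = b"
proof -
  have ab: "a - b \<in> S" using assms by (simp add: subspace_diff)
  have "(a - b) \<bullet> (a - b) = (x - b) \<bullet> (a - b) - (x - a) \<bullet> (a - b)"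
    by (simp add: inner_diff_left)
  also have "\<dots> = 0" using assms(4,5) ab by simp
  finally show ?thesis by simp
qed

lemma proj_in: "isproj p S \<Longrightarrow> p x \<in> S" by (simp add: isproj_def)
lemma proj_orth: "isproj p S \<Longrightarrow> s \<in> S \<Longrightarrow> (x - p x) \<bullet> s = 0" by (simp add: isproj_def)

lemma proj_linear: fixes S :: "'a::real_inner set"
  assumes S: "subspace S" and p: "isproj p S" shows "linear p"
proof (rule linearI)
  fix x y
  show "p (x + y) = p x + p y"
  proof (rule proj_unique[OF S, of _ _ "x+y"])
    show "p (x+y) \<in> S" using proj_in[OF p] .
    show "p x + p y \<in> S" using proj_in[OF p] S by (simp add: subspace_add)
    show "\<forall>s\<in>S. (x + y - p (x + y)) \<bullet> s = 0" using proj_orth[OF p] by blast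
    show "\<forall>s\<in>S. (x + y - (p x + p y)) \<bullet> s = 0"
    proof
      fix s assume "s \<in> S"
      have "(x + y - (p x + p y)) = (x - p x) + (y - p y)" by simp
      then show "(x + y - (p x + p y)) \<bullet> s = 0" using proj_orth[OF p \<open>s\<in>S\<close>, of x] proj_orth[OF p \<open>s\<in>S\<close>, of y]
        by (simp only: inner_add_left)
    qed
  qed
next
  fix c :: real and x
  show "p (c *\<^sub>R x) = c *\<^sub>R p x"
  proof (rule proj_unique[OF S, of _ _ "c *\<^sub>R x"])
    show "p (c *\<^sub>R x) \<in> S" using proj_in[OF p] .
    show "c *\<^sub>R p x \<in> S" using proj_in[OF p] S by (simp add: subspace_scale)
    show "\<forall>s\<in>S. (c *\<^sub>R x - p (c *\<^sub>R x)) \<bullet> s = 0" using proj_orth[OF p] by blast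
    show "\<forall>s\<in>S. (c *\<^sub>R x - c *\<^sub>R p x) \<bullet> s = 0"
    proof
      fix s assume "s \<in> S"
      have "(c *\<^sub>R x - c *\<^sub>R p x) = c *\<^sub>R (x - p x)" by (simp add: scaleR_diff_right)
      then show "(c *\<^sub>R x - c *\<^sub>R p x) \<bullet> s = 0" using proj_orth[OF p \<open>s\<in>S\<close>] by simp
    qed
  qed
qed

lemma proj_sym: assumes p: "isproj p S" shows "p x \<bullet> y = x \<bullet> p y"
proof -
  have "p x \<bullet> y = p x \<bullet> p y + p x \<bullet> (y - p y)" by (simp add: inner_diff_right)
  also have "p x \<bullet> (y - p y) = 0" using proj_orth[OF p proj_in[OF p]] by (simp add: inner_commute)
  also have "x \<bullet> p y = p x \<bullet> p y + (x - p x) \<bullet> p y" by (simp add: inner_diff_left)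
  moreover have "(x - p x) \<bullet> p y = 0" using proj_orth[OF p proj_in[OF p]] .
  ultimately show ?thesis by simp
qed

lemma proj_id: fixes S :: "'a::real_inner set"
  assumes S: "subspace S" and p: "isproj p S" and x: "x \<in> S" shows "p x = x"
  using proj_unique[OF S proj_in[OF p] x, of x] proj_orth[OF p] by simp

lemma proj_nn: assumes p: "isproj p S" shows "p x \<bullet> p x = x \<bullet> p x"
  using proj_orth[OF p proj_in[OF p], of x] by (simp add: inner_diff_left)

lemma proj_pyth: assumes p: "isproj p S" shows "x \<bullet> x = p x \<bullet> p x + (x - p x) \<bullet> (x - p x)"
  using proj_nn[OF p, of x] by (simp add: inner_diff_left inner_diff_right inner_commute)

lemma proj_zero: assumes p: "isproj p S" and x: "\<forall>s\<in>S. x \<bullet> s = 0" shows "p x = 0"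
proof -
  have "p x \<bullet> p x = x \<bullet> p x" by (rule proj_nn[OF p])
  also have "\<dots> = 0" using x proj_in[OF p] by blast
  finally show ?thesis by simp
qed



lemma sym_inner: fixes A :: "real^'n^'n"
  assumes "transpose A = A" shows "(A *v x) \<bullet> y = x \<bullet> (A *v y)"
proof -
  have "(A *v x) \<bullet> y = y \<bullet> (A *v x)" by (simp add: inner_commute)
  also have "\<dots> = (y v* A) \<bullet> x" by (simp add: dot_lmul_matrix)
  also have "y v* A = transpose A *v y" by simp
  also have "\<dots> = A *v y" using assms by simp
  finally show ?thesis by (simp add: inner_commute)
qed

lemma inner_sym: fixes A :: "real^'n^'n"
  assumes "\<And>x y. (A *v x) \<bullet> y = x \<bullet> (A *v y)" shows "transpose A = A"
proof -
  have "transpose A *v x = A *v x" for x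
  proof (rule inner_ext)
    fix y
    have "(transpose A *v x) \<bullet> y = (x v* A) \<bullet> y" by simp
    also have "\<dots> = x \<bullet> (A *v y)" by (simp add: dot_lmul_matrix)
    also have "\<dots> = (A *v x) \<bullet> y" using assms by simp
    finally show "(transpose A *v x) \<bullet> y = (A *v x) \<bullet> y" .
  qed
  then show ?thesis by (simp add: matrix_eq)
qed

lemma ker_orth_row: fixes X :: "real^'d^'n"
  assumes "X *v m = 0" shows "(transpose X *v z) \<bullet> m = 0"
  using assms by (simp add: dot_lmul_matrix)

lemma orth_row_ker: fixes X :: "real^'d^'n"
  assumes "\<forall>r\<in>row_range X. r \<bullet> m = 0" shows "X *v m = 0"
proof -
  have "(transpose X *v (X *v m)) \<bullet> m = 0" using assms by (auto simp: row_range_def)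
  then have "(X *v m) \<bullet> (X *v m) = 0" by (simp add: dot_lmul_matrix)
  then show ?thesis by simp
qed

lemma subspace_row_range: "subspace (row_range X)"
  unfolding row_range_def by (rule linear_subspace_image) (auto simp: subspace_UNIV)

lemma subspace_col: "subspace (range (\<lambda>x. (X::real^'d^'n) *v x))"
  by (rule linear_subspace_image) (auto simp: subspace_UNIV)

definition penrose :: "real^'d^'n \<Rightarrow> real^'n^'d \<Rightarrow> bool" where
  "penrose A B \<longleftrightarrow> A ** B ** A = A \<and> B ** A ** B = B \<and>
                    transpose (A ** B) = A ** B \<and> transpose (B ** A) = B ** A"

lemma pinv_ex1: fixes X :: "real^'d^'n" shows "\<exists>!B. penrose X B"
proof -
  let ?R = "row_range X" and ?C = "range (\<lambda>x. X *v x)"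
  have sR: "subspace ?R" by (rule subspace_row_range)
  have sC: "subspace ?C" by (rule subspace_col)
  obtain pc where pc: "isproj pc ?C" using proj_exists[OF sC] by blast
  obtain pr where pr: "isproj pr ?R" using proj_exists[OF sR] by blast
  have Xpr: "X *v pr x = X *v x" for x
  proof -
    have "X *v (x - pr x) = 0" using proj_orth[OF pr] by (intro orth_row_ker) (simp add: inner_commute)
    then show ?thesis by (simp add: matrix_vector_mult_diff_distrib)
  qed
  have uniq: "r1 = r2" if "r1 \<in> ?R" "r2 \<in> ?R" "X *v r1 = X *v r2" for r1 r2
  proof -
    have d: "r1 - r2 \<in> ?R" using that sR by (simp add: subspace_diff)
    then obtain z where z: "r1 - r2 = transpose X *v z" by (auto simp: row_range_def)
    have "X *v (r1 - r2) = 0" using that by (simp add: matrix_vector_mult_diff_distrib)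
    then have "(transpose X *v z) \<bullet> (r1 - r2) = 0" by (rule ker_orth_row)
    then show ?thesis using z by simp
  qed
  have ex: "\<exists>r. r \<in> ?R \<and> X *v r = pc z" for z
  proof -
    obtain x where "pc z = X *v x" using proj_in[OF pc, of z] by auto
    then show ?thesis using proj_in[OF pr, of x] Xpr by metis
  qed
  define g where "g z = (THE r. r \<in> ?R \<and> X *v r = pc z)" for z
  have ex1: "\<exists>!r. r \<in> ?R \<and> X *v r = pc z" for z
  proof -
    obtain r where r: "r \<in> ?R \<and> X *v r = pc z" using ex by blast
    show ?thesis
    proof (rule ex1I[of _ r])
      show "r \<in> ?R \<and> X *v r = pc z" by (rule r)
      fix y assume "y \<in> ?R \<and> X *v y = pc z"
      then show "y = r" using uniq[of y r] r by simp
    qed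
  qed
  have g: "g z \<in> ?R \<and> X *v g z = pc z" for z
    unfolding g_def by (rule theI'[OF ex1])
  have gu: "r \<in> ?R \<Longrightarrow> X *v r = pc z \<Longrightarrow> g z = r" for r z
    using g[of z] uniq[of "g z" r] by simp
  have lpc: "linear pc" using proj_linear[OF sC pc] .
  have lg: "linear g"
  proof (rule linearI)
    fix x y show "g (x + y) = g x + g y"
    proof (rule gu)
      show "g x + g y \<in> ?R" using g[of x] g[of y] sR by (simp add: subspace_add)
      show "X *v (g x + g y) = pc (x + y)"
        using g[of x] g[of y] linear_add[OF lpc, of x y] by (simp add: matrix_vector_right_distrib)
    qed
  next
    fix c :: real and x show "g (c *\<^sub>R x) = c *\<^sub>R g x"
    proof (rule gu)
      show "c *\<^sub>R g x \<in> ?R" using g[of x] sR by (simp add: subspace_scale)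
      show "X *v (c *\<^sub>R g x) = pc (c *\<^sub>R x)"
        using g[of x] linear_scale[OF lpc, of c x] by (simp add: matrix_vector_mult_scaleR)
    qed
  qed
  define B0 where "B0 = matrix g"
  have B0: "B0 *v z = g z" for z
    unfolding B0_def using matrix_vector_mul(2)[OF lg] by metis
  have XB0: "X *v (B0 *v z) = pc z" for z using B0 g by simp
  have B0X: "B0 *v (X *v x) = pr x" for x
  proof -
    have "pc (X *v x) = X *v x" by (rule proj_id[OF sC pc]) simp
    then have "g (X *v x) = pr x" using gu[of "pr x" "X *v x"] proj_in[OF pr, of x] Xpr[of x] by simp
    then show ?thesis using B0 by simp
  qed
  have pen: "penrose X B0"
    unfolding penrose_def
  proof (intro conjI)
    show "X ** B0 ** X = X"
      by (simp add: matrix_eq matrix_vector_mul_assoc[symmetric] XB0 proj_id[OF sC pc])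
    show "B0 ** X ** B0 = B0"
    proof -
      have "B0 *v (X *v (B0 *v z)) = B0 *v z" for z
        using B0X[of "B0 *v z"] proj_id[OF sR pr, of "B0 *v z"] g[of z] B0[of z] by simp
      then show ?thesis by (simp add: matrix_eq matrix_vector_mul_assoc[symmetric])
    qed
    show "transpose (X ** B0) = X ** B0"
      by (rule inner_sym) (simp add: matrix_vector_mul_assoc[symmetric] XB0 proj_sym[OF pc])
    show "transpose (B0 ** X) = B0 ** X"
      by (rule inner_sym) (simp add: matrix_vector_mul_assoc[symmetric] B0X proj_sym[OF pr])
  qed
  have "B = B0" if "penrose X B" for B
  proof -
    from that have p1: "X ** B ** X = X" and p2: "B ** X ** B = B"
      and p3: "transpose (X ** B) = X ** B" and p4: "transpose (B ** X) = B ** X"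
      by (auto simp: penrose_def)
    have XB: "X *v (B *v z) = pc z" for z
    proof (rule proj_unique[OF sC])
      show "X *v (B *v z) \<in> ?C" by simp
      show "pc z \<in> ?C" by (rule proj_in[OF pc])
      show "\<forall>s\<in>?C. (z - pc z) \<bullet> s = 0" using proj_orth[OF pc] by blast
      show "\<forall>s\<in>?C. (z - X *v (B *v z)) \<bullet> s = 0"
      proof
        fix s assume "s \<in> ?C" then obtain x where s: "s = X *v x" by auto
        have "(X *v (B *v z)) \<bullet> s = ((X ** B) *v z) \<bullet> s" by (simp add: matrix_vector_mul_assoc)
        also have "\<dots> = z \<bullet> ((X ** B) *v s)" by (rule sym_inner[OF p3])
        also have "(X ** B) *v s = (X ** B ** X) *v x" using s by (simp add: matrix_vector_mul_assoc)
        also have "\<dots> = s" using p1 s by simp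
        finally show "(z - X *v (B *v z)) \<bullet> s = 0" by (simp add: inner_diff_left)
      qed
    qed
    have BR: "B *v z \<in> ?R" for z
    proof -
      have "B *v z = (B ** X ** B) *v z" using p2 by simp
      also have "\<dots> = (B ** X) *v (B *v z)" by (simp add: matrix_vector_mul_assoc)
      also have "\<dots> = transpose (B ** X) *v (B *v z)" using p4 by simp
      also have "\<dots> = transpose X *v (transpose B *v (B *v z))"
        by (simp add: matrix_transpose_mul matrix_vector_mul_assoc matrix_mul_assoc)
      finally show ?thesis by (auto simp: row_range_def)
    qed
    have "B *v z = B0 *v z" for z using gu[OF BR XB] B0 by simp
    then show ?thesis by (simp add: matrix_eq)
  qed
  with pen show ?thesis by blast
qed

lemma pinv_penrose: "penrose X (pinv X)"
proof -
  have "pinv X = (THE B. penrose X B)" unfolding pinv_def penrose_def by simp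
  then show ?thesis using theI'[OF pinv_ex1[of X]] by simp
qed



lemma quad0: fixes a b K :: real
  assumes K: "K \<ge> 0" and b: "b \<ge> 0" and h: "\<And>t. 2*t*a + t^2*b \<le> t^2*K"
  shows "a = 0"
proof (rule ccontr)
  assume a: "a \<noteq> 0"
  define t where "t = a / (K + 1)"
  have "2*t*a + t^2*b \<le> t^2*K" by (rule h)
  then have "2*t*a \<le> t^2*K" using b by (smt (verit) zero_le_power2 mult_nonneg_nonneg)
  moreover have "t^2*K < 2*t*a"
  proof -
    have K1: "K + 1 > 0" using K by simp
    have "t^2*K = a^2 * K / (K+1)^2" by (simp add: t_def power_divide)
    also have "\<dots> < a^2 * (K+1) / (K+1)^2 * 2"
    proof -
      have "a^2 > 0" using a by simp
      have e: "a^2*(K+1)*2 - a^2*K = a^2*(K+2)" by (simp add: algebra_simps)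
      have "a^2*(K+2) > 0" using \<open>a^2 > 0\<close> K by simp
      then have "a^2 * K < a^2 * (K+1) * 2" using e by linarith
      then show ?thesis using K1 by (simp add: divide_strict_right_mono)
    qed
    also have "\<dots> = 2*t*a" using K1 unfolding t_def by (simp add: power2_eq_square)
    finally show ?thesis .
  qed
  ultimately show False by simp
qed

lemma pv_swap: "principal_vectors U V r u v \<Longrightarrow> principal_vectors V U r v u"
  unfolding principal_vectors_def by (metis inner_commute)

lemma pv_max:
  fixes U V :: "'a::real_inner set"
  assumes pv: "principal_vectors U V r u v" and i: "i < r"
    and sU: "subspace U" and sV: "subspace V"
    and x: "x \<in> U" and y: "y \<in> V" and o: "\<forall>j<i. x \<bullet> u j = 0 \<and> y \<bullet> v j = 0"
  shows "(x \<bullet> y)^2 \<le> (u i \<bullet> v i)^2 * (x \<bullet> x) * (y \<bullet> y)"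
proof (cases "x = 0 \<or> y = 0")
  case True then show ?thesis by auto
next
  case False
  then have nx: "norm x > 0" and ny: "norm y > 0" by auto
  define x' where "x' = (1 / norm x) *\<^sub>R x"
  define y' where "y' = (1 / norm y) *\<^sub>R y"
  have "x' \<in> U" using x sU by (simp add: x'_def subspace_scale)
  moreover have "y' \<in> V" using y sV by (simp add: y'_def subspace_scale)
  moreover have "norm x' = 1" "norm y' = 1" using nx ny by (auto simp: x'_def y'_def)
  moreover have "\<forall>j<i. x' \<bullet> u j = 0 \<and> y' \<bullet> v j = 0" using o by (simp add: x'_def y'_def)
  ultimately have le: "\<bar>x' \<bullet> y'\<bar> \<le> \<bar>u i \<bullet> v i\<bar>"
    using pv i unfolding principal_vectors_def by blast
  have "x' \<bullet> y' = (x \<bullet> y) / (norm x * norm y)" by (simp add: x'_def y'_def)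
  then have "\<bar>x \<bullet> y\<bar> \<le> \<bar>u i \<bullet> v i\<bar> * (norm x * norm y)"
    using le nx ny by (simp add: abs_div pos_divide_le_eq abs_mult)
  then have "\<bar>x \<bullet> y\<bar>^2 \<le> (\<bar>u i \<bullet> v i\<bar> * (norm x * norm y))^2"
    by (metis power_mono abs_ge_zero)
  then show ?thesis by (simp add: power_mult_distrib power2_norm_eq_inner mult.assoc)
qed

lemma unit_pm: fixes a b :: "'a::real_inner"
  assumes "norm a = 1" "norm b = 1" "\<bar>a \<bullet> b\<bar> = 1" shows "a = b \<or> a = - b"
proof -
  have aa: "a \<bullet> a = 1" "b \<bullet> b = 1" using assms by (auto simp: norm_eq_1)
  show ?thesis
  proof (cases "a \<bullet> b = 1")
    case True
    then have "(a - b) \<bullet> (a - b) = 0" using aa by (simp add: inner_diff_left inner_diff_right inner_commute)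
    then show ?thesis by simp
  next
    case False then have "a \<bullet> b = -1" using assms(3) by linarith
    then have "(a + b) \<bullet> (a + b) = 0" using aa by (simp add: inner_add_left inner_add_right inner_commute)
    then show ?thesis by (simp add: add_eq_0_iff)
  qed
qed



locale twoproj =
  fixes N1 N2 U V :: "'a::euclidean_space set" and p1 p2 :: "'a \<Rightarrow> 'a"
  assumes sN1: "subspace N1" and sN2: "subspace N2" and sU: "subspace U" and sV: "subspace V"
    and pj1: "isproj p1 N1" and pj2: "isproj p2 N2"
    and UN1: "\<And>x n. x \<in> U \<Longrightarrow> n \<in> N1 \<Longrightarrow> x \<bullet> n = 0"
    and VN2: "\<And>x n. x \<in> V \<Longrightarrow> n \<in> N2 \<Longrightarrow> x \<bullet> n = 0"
    and QU: "\<And>z. z - p1 z \<in> U" and QV: "\<And>z. z - p2 z \<in> V"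
begin

lemma swap: "twoproj N2 N1 V U p2 p1"
  by unfold_locales (use sN1 sN2 sU sV pj1 pj2 UN1 VN2 QU QV in auto)

lemma lin1: "linear p1" by (rule proj_linear[OF sN1 pj1])
lemma lin2: "linear p2" by (rule proj_linear[OF sN2 pj2])

lemma p1U: "x \<in> U \<Longrightarrow> p1 x = 0" using proj_zero[OF pj1] UN1 by blast
lemma p2V: "x \<in> V \<Longrightarrow> p2 x = 0" using proj_zero[OF pj2] VN2 by blast

lemma pre_facts:
  assumes pv: "principal_vectors U V r u v" and i0: "i0 < r"
    and one: "\<forall>j<i0. \<bar>u j \<bullet> v j\<bar> = 1" and j: "j < i0"
  shows "u j \<in> U \<and> u j \<in> V \<and> v j \<in> U \<and> v j \<in> V"
proof -
  have jr: "j < r" using j i0 by simp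
  have uv: "u j \<in> U" "v j \<in> V" "norm (u j) = 1" "norm (v j) = 1"
    using pv jr unfolding principal_vectors_def by auto
  have "u j = v j \<or> u j = - v j" using unit_pm[OF uv(3,4)] one j by simp
  then show ?thesis using uv sU sV by (metis subspace_neg minus_minus)
qed

lemma bound:
  assumes pv: "principal_vectors U V r u v" and i0: "i0 < r"
    and one: "\<forall>j<i0. \<bar>u j \<bullet> v j\<bar> = 1"
    and x: "x \<in> N1" and xM: "\<forall>m. m \<in> N1 \<and> m \<in> N2 \<longrightarrow> x \<bullet> m = 0"
  shows "norm (p2 x) \<le> \<bar>u i0 \<bullet> v i0\<bar> * norm x"
proof -
  define c where "c = \<bar>u i0 \<bullet> v i0\<bar>"
  have c0: "c \<ge> 0" by (simp add: c_def)
  define S where "S = {x. x \<in> N1 \<and> (\<forall>m. m \<in> N1 \<and> m \<in> N2 \<longrightarrow> x \<bullet> m = 0) \<and> norm x = 1}"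
  show ?thesis
  proof (cases "x = 0")
    case True then show ?thesis using linear_0[OF lin2] by simp
  next
    case False
    have Seq: "S = N1 \<inter> (\<Inter>m\<in>N1 \<inter> N2. {x. m \<bullet> x = 0}) \<inter> sphere 0 1"
      unfolding S_def by (auto simp: inner_commute)
    have "closed S" unfolding Seq
      by (intro closed_Int closed_subspace[OF sN1] closed_INT ballI closed_hyperplane closed_sphere)
    moreover have "bounded S" unfolding Seq by (meson bounded_Int bounded_sphere)
    ultimately have cS: "compact S" by (simp add: compact_eq_bounded_closed)
    have xS: "(1 / norm x) *\<^sub>R x \<in> S" using False x xM sN1 by (simp add: S_def subspace_scale)
    then have neS: "S \<noteq> {}" by blast
    have cont: "continuous_on S (\<lambda>x. norm (p2 x))"
      by (intro continuous_on_norm linear_continuous_on) (simp add: lin2 linear_conv_bounded_linear[symmetric])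
    obtain xh where xh: "xh \<in> S" and mx: "\<And>y. y \<in> S \<Longrightarrow> norm (p2 y) \<le> norm (p2 xh)"
      using continuous_attains_sup[OF cS neS cont] by blast
    define a where "a = norm (p2 xh)"
    define A where "A = a^2"
    have xhN: "xh \<in> N1" and xhM: "\<forall>m. m \<in> N1 \<and> m \<in> N2 \<longrightarrow> xh \<bullet> m = 0" and xhn: "norm xh = 1"
      using xh by (auto simp: S_def)
    have xx: "xh \<bullet> xh = 1" using xhn by (simp add: norm_eq_1)
    let ?P = "p2 xh"
    have PP: "?P \<bullet> ?P = A" by (simp add: A_def a_def power2_norm_eq_inner)
    have xP: "xh \<bullet> ?P = A" using proj_nn[OF pj2, of xh] PP by simp
    have Px: "?P \<bullet> xh = A" using xP by (simp add: inner_commute)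
    have p1x: "p1 xh = xh" by (rule proj_id[OF sN1 pj1 xhN])
    have maxq: "p2 y \<bullet> p2 y \<le> A * (y \<bullet> y)" if "y \<in> N1" "\<forall>m. m \<in> N1 \<and> m \<in> N2 \<longrightarrow> y \<bullet> m = 0" for y
    proof (cases "y = 0")
      case True then show ?thesis using linear_0[OF lin2] by simp
    next
      case False
      have "(1 / norm y) *\<^sub>R y \<in> S" using False that sN1 by (simp add: S_def subspace_scale)
      then have "norm (p2 ((1 / norm y) *\<^sub>R y)) \<le> a" using mx a_def by blast
      then have "norm (p2 y) / norm y \<le> a" using linear_scale[OF lin2] False by simp
      then have "norm (p2 y) \<le> a * norm y" using False by (simp add: divide_le_eq)
      then have "(norm (p2 y))^2 \<le> (a * norm y)^2" by (simp add: power_mono)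
      then show ?thesis by (simp add: A_def power_mult_distrib power2_norm_eq_inner)
    qed
    have eig: "?P \<bullet> h = 0" if h: "h \<in> N1" "\<forall>m. m \<in> N1 \<and> m \<in> N2 \<longrightarrow> h \<bullet> m = 0" "h \<bullet> xh = 0" for h
    proof -
      define \<beta> where "\<beta> = ?P \<bullet> h"
      define \<gamma> where "\<gamma> = h \<bullet> p2 h"
      have g0: "\<gamma> \<ge> 0" unfolding \<gamma>_def using proj_nn[OF pj2, of h] by (metis inner_ge_zero)
      have hx: "xh \<bullet> h = 0" using h(3) by (simp add: inner_commute)
      have "2*t*\<beta> + t^2*\<gamma> \<le> t^2*(A*(h \<bullet> h))" for t
      proof -
        let ?y = "xh + t *\<^sub>R h"
        have yN: "?y \<in> N1" using xhN h(1) sN1 by (simp add: subspace_add subspace_scale)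
        have yM: "\<forall>m. m \<in> N1 \<and> m \<in> N2 \<longrightarrow> ?y \<bullet> m = 0"
          using xhM h(2) by (simp add: inner_add_left)
        have p2y: "p2 ?y = ?P + t *\<^sub>R p2 h" using linear_add[OF lin2] linear_scale[OF lin2] by simp
        have "p2 ?y \<bullet> p2 ?y = ?y \<bullet> p2 ?y" by (rule proj_nn[OF pj2])
        also have "\<dots> = A + 2*t*\<beta> + t^2*\<gamma>"
          unfolding p2y using xP proj_sym[OF pj2, of h xh] hx
          by (simp add: inner_add_left inner_add_right \<beta>_def \<gamma>_def power2_eq_square inner_commute algebra_simps)
        finally have l: "p2 ?y \<bullet> p2 ?y = A + 2*t*\<beta> + t^2*\<gamma>" .
        have r: "?y \<bullet> ?y = 1 + t^2*(h \<bullet> h)"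
          using xx hx by (simp add: inner_add_left inner_add_right power2_eq_square inner_commute)
        have "A + 2*t*\<beta> + t^2*\<gamma> \<le> A * (1 + t^2*(h \<bullet> h))"
          using maxq[OF yN yM] unfolding l r .
        then show ?thesis by (simp add: algebra_simps)
      qed
      then have "\<beta> = 0" using quad0[of "A*(h \<bullet> h)" \<gamma> \<beta>] g0 by (simp add: A_def)
      then show ?thesis by (simp add: \<beta>_def)
    qed
    have E: "p1 ?P = A *\<^sub>R xh"
    proof -
      define d where "d = p1 ?P - A *\<^sub>R xh"
      have dN: "d \<in> N1" unfolding d_def using proj_in[OF pj1] xhN sN1 by (simp add: subspace_diff subspace_scale)
      have dM: "\<forall>m. m \<in> N1 \<and> m \<in> N2 \<longrightarrow> d \<bullet> m = 0"
      proof (intro allI impI)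
        fix m assume m: "m \<in> N1 \<and> m \<in> N2"
        have "p1 ?P \<bullet> m = ?P \<bullet> p1 m" by (rule proj_sym[OF pj1])
        also have "\<dots> = ?P \<bullet> m" using proj_id[OF sN1 pj1] m by simp
        also have "\<dots> = xh \<bullet> p2 m" by (rule proj_sym[OF pj2])
        also have "\<dots> = xh \<bullet> m" using proj_id[OF sN2 pj2] m by simp
        also have "\<dots> = 0" using xhM m by simp
        finally show "d \<bullet> m = 0" using xhM m by (simp add: d_def inner_diff_left)
      qed
      have dx: "d \<bullet> xh = 0"
      proof -
        have "p1 ?P \<bullet> xh = ?P \<bullet> p1 xh" by (rule proj_sym[OF pj1])
        then show ?thesis using p1x Px xx by (simp add: d_def inner_diff_left)
      qed
      have Pd: "?P \<bullet> d = 0" by (rule eig[OF dN dM dx])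
      have "d \<bullet> d = p1 ?P \<bullet> d - A * (xh \<bullet> d)" by (simp add: d_def inner_diff_left)
      also have "p1 ?P \<bullet> d = ?P \<bullet> p1 d" by (rule proj_sym[OF pj1])
      also have "p1 d = d" by (rule proj_id[OF sN1 pj1 dN])
      finally have "d \<bullet> d = 0" using Pd dx by (simp add: inner_commute)
      then show ?thesis by (simp add: d_def)
    qed
    have A1: "A < 1"
    proof (rule ccontr)
      assume "\<not> A < 1"
      have "xh \<bullet> xh = ?P \<bullet> ?P + (xh - ?P) \<bullet> (xh - ?P)" by (rule proj_pyth[OF pj2])
      then have "(xh - ?P) \<bullet> (xh - ?P) \<le> 0" using xx PP \<open>\<not> A < 1\<close> by simp
      then have "(xh - ?P) \<bullet> (xh - ?P) = 0" by (meson antisym inner_ge_zero)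
      then have "xh = ?P" by simp
      then have "xh \<in> N2" using proj_in[OF pj2, of xh] by simp
      then have "xh \<bullet> xh = 0" using xhM xhN by blast
      then show False using xx by simp
    qed
    have A0: "A \<ge> 0" by (simp add: A_def)
    define u' where "u' = ?P - p1 ?P"
    define v' where "v' = xh - ?P"
    have u'U: "u' \<in> U" unfolding u'_def by (rule QU)
    have v'V: "v' \<in> V" unfolding v'_def by (rule QV)
    have orthz: "u' \<bullet> z = 0 \<and> v' \<bullet> z = 0" if "z \<in> U" "z \<in> V" for z
    proof -
      have p1z: "p1 z = 0" using p1U that by simp
      have p2z: "p2 z = 0" using p2V that by simp
      have a1: "?P \<bullet> z = 0" using proj_sym[OF pj2, of xh z] p2z by simp
      have a2: "p1 ?P \<bullet> z = 0" using proj_sym[OF pj1, of ?P z] p1z by simp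
      have a3: "xh \<bullet> z = 0" using UN1[OF that(1) xhN] by (simp add: inner_commute)
      show ?thesis using a1 a2 a3 by (simp add: u'_def v'_def inner_diff_left)
    qed
    have oo: "\<forall>j<i0. u' \<bullet> u j = 0 \<and> v' \<bullet> v j = 0"
      using pre_facts[OF pv i0 one] orthz by blast
    have key: "(u' \<bullet> v')^2 \<le> (u i0 \<bullet> v i0)^2 * (u' \<bullet> u') * (v' \<bullet> v')"
      by (rule pv_max[OF pv i0 sU sV u'U v'V oo])
    have uv: "u' \<bullet> v' = A*A - A"
      unfolding u'_def v'_def E using PP xP Px xx
      by (simp add: inner_diff_left inner_diff_right algebra_simps)
    have uu: "u' \<bullet> u' = A - A*A"
      unfolding u'_def E using PP xP Px xx
      by (simp add: inner_diff_left inner_diff_right algebra_simps)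
    have vv: "v' \<bullet> v' = 1 - A"
      unfolding v'_def using PP xP Px xx
      by (simp add: inner_diff_left inner_diff_right algebra_simps)
    have Ac: "A \<le> c^2"
    proof (cases "A = 0")
      case True then show ?thesis by simp
    next
      case False
      then have Ap: "A > 0" using A0 by simp
      have "(A*A - A)^2 \<le> c^2 * (A - A*A) * (1 - A)"
        using key uv uu vv by (simp add: c_def)
      then have le: "(A*(1-A)^2) * A \<le> (A*(1-A)^2) * c^2"
        by (simp add: power2_eq_square algebra_simps)
      have pos: "A*(1-A)^2 > 0" using Ap A1 by simp
      show ?thesis by (rule mult_left_le_imp_le[OF le pos])
    qed
    have ac: "a \<le> c" using power2_le_imp_le[of a c] Ac c0 unfolding A_def by argo
    have "norm (p2 ((1 / norm x) *\<^sub>R x)) \<le> a" using mx[OF xS] by (simp add: a_def)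
    then have "norm (p2 x) / norm x \<le> c" using linear_scale[OF lin2] False ac by simp
    then show ?thesis using False by (simp add: divide_le_eq c_def mult.commute)
  qed
qed

end


context twoproj begin

lemma var:
  assumes pv: "principal_vectors U V r u v" and i0: "i0 < r"
    and h: "h \<in> U" "\<forall>j<i0. h \<bullet> u j = 0" "h \<bullet> u i0 = 0"
  shows "h \<bullet> v i0 = 0"
proof -
  have uU: "u i0 \<in> U" and vV: "v i0 \<in> V" and nu: "norm (u i0) = 1" and nv: "norm (v i0) = 1"
    and ou: "\<forall>j<i0. u i0 \<bullet> u j = 0" and ov: "\<forall>j<i0. v i0 \<bullet> v j = 0"
    using pv i0 unfolding principal_vectors_def by auto
  have uu: "u i0 \<bullet> u i0 = 1" and vv: "v i0 \<bullet> v i0 = 1" using nu nv by (auto simp: norm_eq_1)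
  define s where "s = u i0 \<bullet> v i0"
  define \<beta> where "\<beta> = h \<bullet> v i0"
  have hu: "u i0 \<bullet> h = 0" using h(3) by (simp add: inner_commute)
  have ineq: "2*t*(s*\<beta>) + t^2*\<beta>^2 \<le> t^2*(s^2*(h \<bullet> h))" for t
  proof -
    let ?y = "u i0 + t *\<^sub>R h"
    have yU: "?y \<in> U" using uU h(1) sU by (simp add: subspace_add subspace_scale)
    have yo: "\<forall>j<i0. ?y \<bullet> u j = 0 \<and> v i0 \<bullet> v j = 0" using ou ov h(2) by (simp add: inner_add_left)
    have m: "(?y \<bullet> v i0)^2 \<le> s^2 * (?y \<bullet> ?y) * (v i0 \<bullet> v i0)"
      unfolding s_def by (rule pv_max[OF pv i0 sU sV yU vV yo])
    have a: "?y \<bullet> v i0 = s + t*\<beta>" by (simp add: inner_add_left s_def \<beta>_def)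
    have b: "?y \<bullet> ?y = 1 + t^2*(h \<bullet> h)"
      using uu hu by (simp add: inner_add_left inner_add_right power2_eq_square inner_commute)
    have "(s + t*\<beta>)^2 \<le> s^2 * (1 + t^2*(h \<bullet> h))" using m unfolding a b vv by simp
    then show ?thesis by (simp add: power2_eq_square algebra_simps)
  qed
  show ?thesis
  proof (cases "s = 0")
    case True
    then have "\<beta>^2 \<le> 0" using ineq[of 1] by simp
    then show ?thesis by (simp add: \<beta>_def)
  next
    case False
    have "s*\<beta> = 0" using quad0[of "s^2*(h \<bullet> h)" "\<beta>^2" "s*\<beta>"] ineq by simp
    then show ?thesis using False by (simp add: \<beta>_def)
  qed
qed

lemma Qv:
  assumes pv: "principal_vectors U V r u v" and i0: "i0 < r"
    and one: "\<forall>j<i0. \<bar>u j \<bullet> v j\<bar> = 1"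
  shows "p1 (v i0) = v i0 - (u i0 \<bullet> v i0) *\<^sub>R u i0"
proof -
  have uU: "u i0 \<in> U" and vV: "v i0 \<in> V" and nu: "norm (u i0) = 1"
    and ou: "\<forall>j<i0. u i0 \<bullet> u j = 0" and ov: "\<forall>j<i0. v i0 \<bullet> v j = 0"
    using pv i0 unfolding principal_vectors_def by auto
  have uu: "u i0 \<bullet> u i0 = 1" using nu by (simp add: norm_eq_1)
  define s where "s = u i0 \<bullet> v i0"
  let ?v = "v i0" and ?u = "u i0"
  define g where "g = (?v - p1 ?v) - s *\<^sub>R ?u"
  have gU: "g \<in> U" unfolding g_def using QU[of ?v] uU sU by (simp add: subspace_diff subspace_scale)
  have p1g: "p1 g = 0" by (rule p1U[OF gU])
  have p1u: "p1 ?u = 0" by (rule p1U[OF uU])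
  have go: "\<forall>j<i0. g \<bullet> u j = 0"
  proof (intro allI impI)
    fix j assume j: "j < i0"
    have ujU: "u j \<in> U" using pre_facts[OF pv i0 one j] by simp
    have "u j = v j \<or> u j = - v j"
      using unit_pm[of "u j" "v j"] one j pv i0 unfolding principal_vectors_def by auto
    then have a: "?v \<bullet> u j = 0" using ov j by auto
    have b: "p1 ?v \<bullet> u j = 0" using proj_sym[OF pj1, of ?v "u j"] p1U[OF ujU] by simp
    show "g \<bullet> u j = 0" using a b ou j by (simp add: g_def inner_diff_left)
  qed
  have gu: "g \<bullet> ?u = 0"
  proof -
    have a: "p1 ?v \<bullet> ?u = 0" using proj_sym[OF pj1, of ?v ?u] p1u by simp
    have b: "?v \<bullet> ?u = s" by (simp add: s_def inner_commute)
    have "g \<bullet> ?u = ?v \<bullet> ?u - p1 ?v \<bullet> ?u - s * (?u \<bullet> ?u)" by (simp add: g_def inner_diff_left)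
    then show ?thesis using a b uu by simp
  qed
  have gv: "g \<bullet> ?v = 0" by (rule var[OF pv i0 gU go gu])
  have "g \<bullet> g = g \<bullet> ?v - g \<bullet> p1 ?v - s * (g \<bullet> ?u)" by (simp add: g_def inner_diff_right)
  also have "g \<bullet> p1 ?v = 0" using proj_sym[OF pj1, of g ?v] p1g by simp
  finally have "g \<bullet> g = 0" using gv gu by simp
  then have "g = 0" by simp
  then show ?thesis by (simp add: g_def s_def algebra_simps)
qed

lemma tight:
  assumes pv: "principal_vectors U V r u v" and i0: "i0 < r"
    and one: "\<forall>j<i0. \<bar>u j \<bullet> v j\<bar> = 1" and lt: "\<bar>u i0 \<bullet> v i0\<bar> < 1"
  shows "\<exists>x. x \<in> N1 \<and> (\<forall>m. m \<in> N1 \<and> m \<in> N2 \<longrightarrow> x \<bullet> m = 0) \<and> x \<noteq> 0 \<and> norm x \<le> 1 \<and>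
     p1 x = x \<and> p1 (p2 x) = (u i0 \<bullet> v i0)^2 *\<^sub>R x \<and>
     p2 x \<bullet> p2 x = (u i0 \<bullet> v i0)^2 * (x \<bullet> x)"
proof -
  interpret sw: twoproj N2 N1 V U p2 p1 by (rule swap)
  have uU: "u i0 \<in> U" and vV: "v i0 \<in> V" and nu: "norm (u i0) = 1" and nv: "norm (v i0) = 1"
    using pv i0 unfolding principal_vectors_def by auto
  have uu: "u i0 \<bullet> u i0 = 1" and vv: "v i0 \<bullet> v i0 = 1" using nu nv by (auto simp: norm_eq_1)
  define s where "s = u i0 \<bullet> v i0"
  let ?v = "v i0" and ?u = "u i0"
  have vu: "?v \<bullet> ?u = s" by (simp add: s_def inner_commute)
  have q1: "p1 ?v = ?v - s *\<^sub>R ?u" unfolding s_def by (rule Qv[OF pv i0 one])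
  have one': "\<forall>j<i0. \<bar>v j \<bullet> u j\<bar> = 1" using one by (simp add: inner_commute)
  have q2: "p2 ?u = ?u - s *\<^sub>R ?v" using sw.Qv[OF pv_swap[OF pv] i0 one'] vu by simp
  define x where "x = ?v - s *\<^sub>R ?u"
  have xN: "x \<in> N1" using proj_in[OF pj1, of ?v] q1 by (simp add: x_def)
  have p1x: "p1 x = x" by (rule proj_id[OF sN1 pj1 xN])
  have p2v: "p2 ?v = 0" by (rule p2V[OF vV])
  have p1u: "p1 ?u = 0" by (rule p1U[OF uU])
  have p2x: "p2 x = s^2 *\<^sub>R ?v - s *\<^sub>R ?u"
  proof -
    have "p2 x = p2 ?v - p2 (s *\<^sub>R ?u)" unfolding x_def by (rule linear_diff[OF lin2])
    also have "\<dots> = p2 ?v - s *\<^sub>R p2 ?u" by (simp add: linear_scale[OF lin2])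
    also have "\<dots> = s^2 *\<^sub>R ?v - s *\<^sub>R ?u" unfolding p2v q2
      by (simp add: algebra_simps power2_eq_square)
    finally show ?thesis .
  qed
  have p12x: "p1 (p2 x) = s^2 *\<^sub>R x"
  proof -
    have "p1 (p2 x) = p1 (s^2 *\<^sub>R ?v) - p1 (s *\<^sub>R ?u)" unfolding p2x by (rule linear_diff[OF lin1])
    also have "\<dots> = s^2 *\<^sub>R p1 ?v - s *\<^sub>R p1 ?u" by (simp add: linear_scale[OF lin1])
    also have "\<dots> = s^2 *\<^sub>R x" unfolding p1u q1 x_def by simp
    finally show ?thesis .
  qed
  have xx: "x \<bullet> x = 1 - s^2"
    unfolding x_def using uu vv vu by (simp add: inner_diff_left inner_diff_right power2_eq_square inner_commute)
  have pp: "p2 x \<bullet> p2 x = s^2 * (1 - s^2)"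
    unfolding p2x using uu vv vu by (simp add: inner_diff_left inner_diff_right power2_eq_square inner_commute algebra_simps)
  have s1: "s^2 < 1" using lt by (simp add: s_def abs_square_less_1)
  have xM: "\<forall>m. m \<in> N1 \<and> m \<in> N2 \<longrightarrow> x \<bullet> m = 0"
    using UN1[OF uU] VN2[OF vV] by (simp add: x_def inner_diff_left)
  have x0: "x \<noteq> 0" using xx s1 by auto
  have "norm x ^2 \<le> 1" using xx by (simp add: power2_norm_eq_inner)
  then have nx: "norm x \<le> 1" by (simp add: power_le_one_iff abs_le_iff norm_ge_zero power2_le_iff_abs_le)
  show ?thesis
    by (intro exI[of _ x]) (use xN xM x0 nx p1x p12x pp xx in \<open>simp add: s_def\<close>)
qed

end


lemma iter_Q:
  assumes st: "\<And>t. f (Suc t) = (if t mod 2 = 0 then p1 (f t) else p2 (f t))"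
  and Q1: "\<And>x. Q x \<Longrightarrow> Q (p1 x)" and Q2: "\<And>x. Q x \<Longrightarrow> Q (p2 x)" and Q0: "Q (f 0)"
  shows "Q (f t)"
  by (induction t) (use st Q0 Q1 Q2 in auto)

lemma iter_bound:
  fixes f :: "nat \<Rightarrow> 'a::real_normed_vector"
  assumes st: "\<And>t. f (Suc t) = (if t mod 2 = 0 then p1 (f t) else p2 (f t))"
  and n1: "\<And>x. norm (p1 x) \<le> norm x"
  and b2: "\<And>x. Q x \<Longrightarrow> norm (p2 (p1 x)) \<le> c * norm (p1 x)"
  and b1: "\<And>x. Q x \<Longrightarrow> norm (p1 (p2 x)) \<le> c * norm (p2 x)"
  and Q1: "\<And>x. Q x \<Longrightarrow> Q (p1 x)" and Q2: "\<And>x. Q x \<Longrightarrow> Q (p2 x)" and Q0: "Q (f 0)"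
  and c0: "c \<ge> 0"
  shows "norm (f (Suc (Suc (2*k)))) \<le> c^(Suc (2*k)) * norm (f 0)"
proof -
  have Qa: "Q (f t)" for t by (rule iter_Q[OF st Q1 Q2 Q0])
  have e1: "f (Suc (2*k)) = p1 (f (2*k))" for k using st[of "2*k"] by simp
  have e2: "f (Suc (Suc (2*k))) = p2 (f (Suc (2*k)))" for k using st[of "Suc (2*k)"] by simp
  show ?thesis
  proof (induction k)
    case 0
    have "norm (f 2) = norm (p2 (p1 (f 0)))" using e1[of 0] e2[of 0] by (simp add: numeral_2_eq_2)
    also have "\<dots> \<le> c * norm (p1 (f 0))" by (rule b2[OF Qa])
    also have "\<dots> \<le> c * norm (f 0)" by (rule mult_left_mono[OF n1 c0])
    finally show ?case by (simp add: numeral_2_eq_2)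
  next
    case (Suc k)
    let ?a = "f (Suc (Suc (2*k)))"
    have A: "f (Suc (Suc (2 * Suc k))) = p2 (p1 ?a)"
      using e1[of "Suc k"] e2[of "Suc k"] by simp
    have B: "norm (p1 ?a) \<le> c * norm ?a"
      using b1[OF Qa[of "Suc (2*k)"]] e2[of k] by simp
    have "norm (f (Suc (Suc (2 * Suc k)))) \<le> c * norm (p1 ?a)" unfolding A by (rule b2[OF Qa])
    also have "\<dots> \<le> c * (c * norm ?a)" by (rule mult_left_mono[OF B c0])
    also have "\<dots> \<le> c * (c * (c^(Suc (2*k)) * norm (f 0)))"
      by (intro mult_left_mono Suc.IH c0)
    also have "\<dots> = c^(Suc (2 * Suc k)) * norm (f 0)" by (simp add: algebra_simps)
    finally show ?case .
  qed
qed

lemma iter_tight: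
  fixes f :: "nat \<Rightarrow> 'a::real_vector"
  assumes st: "\<And>t. f (Suc t) = (if t mod 2 = 0 then p1 (f t) else p2 (f t))"
  and l1: "linear p1" and l2: "linear p2"
  and f0: "f 0 = x" and p1x: "p1 x = x" and e: "p1 (p2 x) = s *\<^sub>R x"
  shows "f (Suc (2*k)) = s^k *\<^sub>R x \<and> f (Suc (Suc (2*k))) = s^k *\<^sub>R p2 x"
proof (induction k)
  case 0 then show ?case using st[of 0] st[of 1] f0 p1x by simp
next
  case (Suc k)
  have a: "f (Suc (2 * Suc k)) = p1 (f (Suc (Suc (2*k))))" using st[of "Suc (Suc (2*k))"] by simp
  have b: "f (Suc (Suc (2 * Suc k))) = p2 (f (Suc (2 * Suc k)))" using st[of "Suc (2 * Suc k)"] by simp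
  have c: "f (Suc (2 * Suc k)) = s^(Suc k) *\<^sub>R x"
    unfolding a using Suc.IH linear_scale[OF l1] e by simp
  show ?case using c b linear_scale[OF l2] by simp
qed

definition mp :: "real^'d^'n \<Rightarrow> real^'d \<Rightarrow> real^'d" where
  "mp X x = x - pinv X *v (X *v x)"

lemma subspace_ker: "subspace {x. (X::real^'d^'n) *v x = 0}"
  unfolding subspace_def by (auto simp: matrix_vector_right_distrib matrix_vector_mult_scaleR)

lemma mp_proj: "isproj (mp X) {x. X *v x = 0}"
  unfolding isproj_def
proof (intro allI conjI ballI)
  fix x
  have p: "penrose X (pinv X)" by (rule pinv_penrose)
  then have p1: "X ** pinv X ** X = X" and p4: "transpose (pinv X ** X) = pinv X ** X"
    by (auto simp: penrose_def)
  have "X *v (pinv X *v (X *v x)) = (X ** pinv X ** X) *v x" by (simp add: matrix_vector_mul_assoc matrix_mul_assoc)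
  then show "mp X x \<in> {x. X *v x = 0}" using p1 by (simp add: mp_def matrix_vector_mult_diff_distrib)
  fix s assume "s \<in> {x. X *v x = 0}"
  then have s: "X *v s = 0" by simp
  have "(x - mp X x) \<bullet> s = ((pinv X ** X) *v x) \<bullet> s" by (simp add: mp_def matrix_vector_mul_assoc)
  also have "\<dots> = x \<bullet> ((pinv X ** X) *v s)" by (rule sym_inner[OF p4])
  also have "\<dots> = 0" using s by (simp add: matrix_vector_mul_assoc[symmetric])
  finally show "(x - mp X x) \<bullet> s = 0" .
qed

lemma mp_Q: "z - mp X z \<in> row_range X"
proof -
  have p4: "transpose (pinv X ** X) = pinv X ** X" using pinv_penrose by (auto simp: penrose_def)
  have "z - mp X z = (pinv X ** X) *v z" by (simp add: mp_def matrix_vector_mul_assoc)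
  also have "\<dots> = transpose (pinv X ** X) *v z" using p4 by simp
  also have "\<dots> = transpose X *v (transpose (pinv X) *v z)"
    by (simp only: matrix_transpose_mul matrix_vector_mul_assoc)
  finally have eq: "z - mp X z = transpose X *v (transpose (pinv X) *v z)" .
  show ?thesis unfolding row_range_def eq by (rule rangeI)
qed

lemma mp_twoproj:
  "twoproj {x. X1 *v x = 0} {x. X2 *v x = 0} (row_range X1) (row_range X2) (mp X1) (mp X2)"
proof -
  have o: "x \<bullet> n = 0" if "x \<in> row_range X" "X *v n = 0" for x n and X :: "real^'d^'n"
    using that ker_orth_row[of X n] unfolding row_range_def by blast
  show ?thesis
  proof (rule twoproj.intro[OF subspace_ker subspace_ker subspace_row_range subspace_row_range
       mp_proj mp_proj _ _ mp_Q mp_Q])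
    show "x \<bullet> n = 0" if "x \<in> row_range X1" "n \<in> {x. X1 *v x = 0}" for x n
      using o[of x X1 n] that by simp
    show "x \<bullet> n = 0" if "x \<in> row_range X2" "n \<in> {x. X2 *v x = 0}" for x n
      using o[of x X2 n] that by simp
  qed
qed

lemma cyc_err:
  assumes "X1 *v ws = y1" "X2 *v ws = y2"
  shows "cyc_iter X1 y1 X2 y2 (Suc t) - ws =
    (if t mod 2 = 0 then mp X1 (cyc_iter X1 y1 X2 y2 t - ws) else mp X2 (cyc_iter X1 y1 X2 y2 t - ws))"
  using assms by (simp add: proj_step_def mp_def matrix_vector_mult_diff_distrib algebra_simps)

lemma wstar_char:
  fixes X1 :: "real^'d^'n1" and X2 :: "real^'d^'n2"
  assumes w1: "X1 *v w = y1" and w2: "X2 *v w = y2"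
    and wM: "\<forall>m. X1 *v m = 0 \<and> X2 *v m = 0 \<longrightarrow> w \<bullet> m = 0"
  shows "wstar X1 y1 X2 y2 = w"
proof -
  have dec: "norm v ^2 = norm w ^2 + norm (v - w) ^2" if "X1 *v v = y1" "X2 *v v = y2" for v
  proof -
    have "X1 *v (v - w) = 0 \<and> X2 *v (v - w) = 0" using that w1 w2 by (simp add: matrix_vector_mult_diff_distrib)
    then have o: "w \<bullet> (v - w) = 0" using wM by blast
    have "v \<bullet> v = (w + (v - w)) \<bullet> (w + (v - w))" by simp
    also have "\<dots> = w \<bullet> w + (v - w) \<bullet> (v - w)" using o
      by (simp only: inner_add_left inner_add_right inner_commute[of "v - w" w])
    finally show ?thesis by (simp add: power2_norm_eq_inner)
  qed
  show ?thesis unfolding wstar_def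
  proof (rule the_equality)
    show "X1 *v w = y1 \<and> X2 *v w = y2 \<and> (\<forall>v. X1 *v v = y1 \<and> X2 *v v = y2 \<longrightarrow> norm w \<le> norm v)"
    proof (intro conjI allI impI)
      fix v assume "X1 *v v = y1 \<and> X2 *v v = y2"
      then have "norm w ^2 \<le> norm v ^2" using dec[of v] by (simp del: power2_norm_eq_inner)
      then show "norm w \<le> norm v" by (rule power2_le_imp_le) simp
    qed (use w1 w2 in auto)
  next
    fix v assume v: "X1 *v v = y1 \<and> X2 *v v = y2 \<and> (\<forall>v'. X1 *v v' = y1 \<and> X2 *v v' = y2 \<longrightarrow> norm v \<le> norm v')"
    then have "norm v \<le> norm w" using w1 w2 by blast
    then have "norm v ^2 \<le> norm w ^2" by (simp add: power_mono)
    moreover have "norm v ^2 = norm w ^2 + norm (v - w) ^2" using dec v by blast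
    ultimately have "norm (v - w) ^2 \<le> 0" by linarith
    then show "v = w" by simp
  qed
qed



theorem mainTheorem3:
  fixes X1 :: "real^'d^'n1" and y1 :: "real^'n1"
    and X2 :: "real^'d^'n2" and y2 :: "real^'n2"
    and u v :: "nat \<Rightarrow> real^'d" and n :: nat
  assumes S: "in_S2 X1 y1 X2 y2"
    and pv: "principal_vectors (row_range X1) (row_range X2)
               (min (rank X1) (rank X2)) u v"
    and nz: "\<exists>i < min (rank X1) (rank X2). arccos \<bar>u i \<bullet> v i\<bar> \<noteq> 0"
    and n: "n \<ge> 1"
  defines "\<theta>F \<equiv> Min {arccos \<bar>u i \<bullet> v i\<bar> | i. i < min (rank X1) (rank X2)
                                     \<and> arccos \<bar>u i \<bullet> v i\<bar> \<noteq> 0}"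
  shows "((norm (cyc_iter X1 y1 X2 y2 (2*n) - wstar X1 y1 X2 y2))\<^sup>2
           \<le> ((cos \<theta>F)\<^sup>2) ^ (2*n - 1) * (norm (wstar X1 y1 X2 y2))\<^sup>2) \<and>
         (\<exists>y1' y2'. in_S2 X1 y1' X2 y2' \<and> wstar X1 y1' X2 y2' \<noteq> 0 \<and>
           (norm (cyc_iter X1 y1' X2 y2' (2*n) - wstar X1 y1' X2 y2'))\<^sup>2
             = ((cos \<theta>F)\<^sup>2) ^ (2*n - 1) * (norm (wstar X1 y1' X2 y2'))\<^sup>2)"
proof -
  obtain k where nk: "n = Suc k" using n by (cases n) auto
  have n2: "2*n = Suc (Suc (2*k))" and n21: "2*n - 1 = Suc (2*k)" using nk by auto
  obtain w0 where w0: "norm w0 \<le> 1" "y1 = X1 *v w0" "y2 = X2 *v w0"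
    using S unfolding in_S2_def by blast
  let ?N1 = "{x. X1 *v x = 0}" and ?N2 = "{x. X2 *v x = 0}"
  let ?U = "row_range X1" and ?V = "row_range X2"
  interpret tp: twoproj ?N1 ?N2 ?U ?V "mp X1" "mp X2" by (rule mp_twoproj)
  interpret sw: twoproj ?N2 ?N1 ?V ?U "mp X2" "mp X1" by (rule tp.swap)
  define Ms where "Ms = {x. X1 *v x = 0 \<and> X2 *v x = 0}"
  have sMs: "subspace Ms" unfolding Ms_def subspace_def
    by (auto simp: matrix_vector_right_distrib matrix_vector_mult_scaleR)
  obtain pm where pm: "isproj pm Ms" using proj_exists[OF sMs] by blast
  define ws where "ws = w0 - pm w0"
  have pmM: "X1 *v pm w0 = 0" "X2 *v pm w0 = 0" using proj_in[OF pm, of w0] by (auto simp: Ms_def)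
  have ws1: "X1 *v ws = y1" and ws2: "X2 *v ws = y2"
    using pmM w0 by (auto simp: ws_def matrix_vector_mult_diff_distrib)
  have wsM: "\<forall>m. X1 *v m = 0 \<and> X2 *v m = 0 \<longrightarrow> ws \<bullet> m = 0"
    using proj_orth[OF pm] by (auto simp: ws_def Ms_def)
  have wst: "wstar X1 y1 X2 y2 = ws" by (rule wstar_char[OF ws1 ws2 wsM])
  define r where "r = min (rank X1) (rank X2)"
  define P where "P i \<longleftrightarrow> i < r \<and> arccos \<bar>u i \<bullet> v i\<bar> \<noteq> 0" for i
  define i0 where "i0 = (LEAST i. P i)"
  have exP: "\<exists>i. P i" using nz by (auto simp: P_def r_def)
  have Pi0: "P i0" unfolding i0_def by (rule LeastI_ex[OF exP])
  have i0r: "i0 < r" using Pi0 by (simp add: P_def)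
  have pv': "principal_vectors ?U ?V r u v" using pv by (simp add: r_def)
  have le1: "\<bar>u i \<bullet> v i\<bar> \<le> 1" if "i < r" for i
  proof -
    have "norm (u i) = 1" "norm (v i) = 1" using pv' that unfolding principal_vectors_def by auto
    then show ?thesis using Cauchy_Schwarz_ineq2[of "u i" "v i"] by simp
  qed
  have one: "\<forall>j<i0. \<bar>u j \<bullet> v j\<bar> = 1"
  proof (intro allI impI)
    fix j assume j: "j < i0"
    then have "\<not> P j" unfolding i0_def by (rule not_less_Least)
    moreover have jr: "j < r" using j i0r by simp
    ultimately have a: "arccos \<bar>u j \<bullet> v j\<bar> = 0" by (simp add: P_def)
    have "\<bar>u j \<bullet> v j\<bar> = cos (arccos \<bar>u j \<bullet> v j\<bar>)" using le1[OF jr] by simp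
    then show "\<bar>u j \<bullet> v j\<bar> = 1" using a by simp
  qed
  have one': "\<forall>j<i0. \<bar>v j \<bullet> u j\<bar> = 1" using one by (simp add: inner_commute)
  define c where "c = \<bar>u i0 \<bullet> v i0\<bar>"
  have c0: "c \<ge> 0" by (simp add: c_def)
  have clt: "c < 1"
  proof -
    have "c \<noteq> 1" using Pi0 by (auto simp: P_def c_def)
    then show ?thesis using le1[OF i0r] by (simp add: c_def)
  qed
  have cosF: "cos \<theta>F = c"
  proof -
    let ?T = "{arccos \<bar>u i \<bullet> v i\<bar> | i. i < min (rank X1) (rank X2) \<and> arccos \<bar>u i \<bullet> v i\<bar> \<noteq> 0}"
    have Teq: "?T = (\<lambda>i. arccos \<bar>u i \<bullet> v i\<bar>) ` {i. P i}" by (auto simp: P_def r_def)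
    have fT: "finite ?T" unfolding Teq
      by (rule finite_imageI, rule finite_subset[of _ "{..<r}"]) (auto simp: P_def)
    have i0T: "arccos c \<in> ?T" using Pi0 by (auto simp: P_def r_def c_def)
    then have neT: "?T \<noteq> {}" by blast
    have "\<theta>F \<in> ?T" unfolding \<theta>F_def by (rule Min_in[OF fT neT])
    then obtain i where i: "P i" and thi: "\<theta>F = arccos \<bar>u i \<bullet> v i\<bar>" unfolding Teq by auto
    have ir: "i < r" using i by (simp add: P_def)
    have i0i: "i0 \<le> i" unfolding i0_def by (rule Least_le[of P, OF i])
    have ci: "\<bar>u i \<bullet> v i\<bar> \<le> c"
    proof -
      have ui: "u i \<in> ?U" "v i \<in> ?V" "norm (u i) = 1" "norm (v i) = 1"
        using pv' ir unfolding principal_vectors_def by auto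
      have oi: "\<forall>j<i0. u i \<bullet> u j = 0 \<and> v i \<bullet> v j = 0"
        using pv' ir i0i unfolding principal_vectors_def by auto
      have "(u i \<bullet> v i)^2 \<le> (u i0 \<bullet> v i0)^2 * (u i \<bullet> u i) * (v i \<bullet> v i)"
        by (rule pv_max[OF pv' i0r tp.sU tp.sV ui(1,2) oi])
      then have "\<bar>u i \<bullet> v i\<bar>^2 \<le> c^2" using ui(3,4) by (simp add: c_def norm_eq_1)
      then show ?thesis using c0 by (rule power2_le_imp_le)
    qed
    have cosi: "cos \<theta>F = \<bar>u i \<bullet> v i\<bar>" using thi le1[OF ir] by simp
    have "\<theta>F \<le> arccos c" unfolding \<theta>F_def by (rule Min_le[OF fT i0T])
    moreover have "0 \<le> \<theta>F" using thi le1[OF ir] by (simp add: arccos_lbound)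
    moreover have "arccos c \<le> pi" using c0 clt by (simp add: arccos_ubound)
    ultimately have "cos (arccos c) \<le> cos \<theta>F" by (intro cos_monotone_0_pi_le)
    then have "c \<le> cos \<theta>F" using c0 clt by simp
    then show ?thesis using ci cosi by simp
  qed
  define Q where "Q x \<longleftrightarrow> (\<forall>m. m \<in> ?N1 \<and> m \<in> ?N2 \<longrightarrow> x \<bullet> m = 0)" for x
  have Q1: "Q (mp X1 x)" if "Q x" for x
  proof -
    have "mp X1 x \<bullet> m = 0" if m: "m \<in> ?N1 \<and> m \<in> ?N2" for m
    proof -
      have "mp X1 x \<bullet> m = x \<bullet> mp X1 m" by (rule proj_sym[OF tp.pj1])
      also have "mp X1 m = m" using proj_id[OF tp.sN1 tp.pj1] m by blast
      finally show ?thesis using \<open>Q x\<close> m by (simp add: Q_def)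
    qed
    then show ?thesis by (simp add: Q_def)
  qed
  have Q2: "Q (mp X2 x)" if "Q x" for x
  proof -
    have "mp X2 x \<bullet> m = 0" if m: "m \<in> ?N1 \<and> m \<in> ?N2" for m
    proof -
      have "mp X2 x \<bullet> m = x \<bullet> mp X2 m" by (rule proj_sym[OF tp.pj2])
      also have "mp X2 m = m" using proj_id[OF tp.sN2 tp.pj2] m by blast
      finally show ?thesis using \<open>Q x\<close> m by (simp add: Q_def)
    qed
    then show ?thesis by (simp add: Q_def)
  qed
  have n1: "norm (mp X1 x) \<le> norm x" for x
  proof -
    have "x \<bullet> x = mp X1 x \<bullet> mp X1 x + (x - mp X1 x) \<bullet> (x - mp X1 x)" by (rule proj_pyth[OF tp.pj1])
    then have "norm (mp X1 x) ^2 \<le> norm x ^2" by (simp add: power2_norm_eq_inner)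
    then show ?thesis by (rule power2_le_imp_le) simp
  qed
  have b2: "norm (mp X2 (mp X1 x)) \<le> c * norm (mp X1 x)" if "Q x" for x
    unfolding c_def
  proof (rule tp.bound[OF pv' i0r one])
    show "mp X1 x \<in> ?N1" by (rule proj_in[OF tp.pj1])
    show "\<forall>m. m \<in> ?N1 \<and> m \<in> ?N2 \<longrightarrow> mp X1 x \<bullet> m = 0" using Q1[OF that] by (simp add: Q_def)
  qed
  have b1: "norm (mp X1 (mp X2 x)) \<le> c * norm (mp X2 x)" if "Q x" for x
  proof -
    have "norm (mp X1 (mp X2 x)) \<le> \<bar>v i0 \<bullet> u i0\<bar> * norm (mp X2 x)"
    proof (rule sw.bound[OF pv_swap[OF pv'] i0r one'])
      show "mp X2 x \<in> ?N2" by (rule proj_in[OF tp.pj2])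
      show "\<forall>m. m \<in> ?N2 \<and> m \<in> ?N1 \<longrightarrow> mp X2 x \<bullet> m = 0" using Q2[OF that] by (auto simp: Q_def)
    qed
    then show ?thesis by (simp add: c_def inner_commute)
  qed
  define f where "f t = cyc_iter X1 y1 X2 y2 t - ws" for t
  have stf: "f (Suc t) = (if t mod 2 = 0 then mp X1 (f t) else mp X2 (f t))" for t
    unfolding f_def by (rule cyc_err[OF ws1 ws2])
  have Q0: "Q (f 0)" using wsM by (simp add: f_def Q_def)
  have bd: "norm (f (Suc (Suc (2*k)))) \<le> c^(Suc (2*k)) * norm (f 0)"
    by (rule iter_bound[OF stf n1 b2 b1 Q1 Q2 Q0 c0])
  have f0: "norm (f 0) = norm ws" by (simp add: f_def)
  have part1: "(norm (f (Suc (Suc (2*k)))))^2 \<le> (c^2)^(Suc (2*k)) * (norm ws)^2"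
  proof -
    have "(norm (f (Suc (Suc (2*k)))))^2 \<le> (c^(Suc (2*k)) * norm (f 0))^2"
      using bd by (rule power_mono) simp
    then show ?thesis using f0 by (simp add: power_mult_distrib power_mult[symmetric] mult.commute)
  qed
  have lt: "\<bar>u i0 \<bullet> v i0\<bar> < 1" using clt by (simp add: c_def)
  obtain x where xN: "x \<in> ?N1" and xM: "\<forall>m. m \<in> ?N1 \<and> m \<in> ?N2 \<longrightarrow> x \<bullet> m = 0"
    and x0: "x \<noteq> 0" and nx: "norm x \<le> 1" and p1x: "mp X1 x = x"
    and p12x: "mp X1 (mp X2 x) = (u i0 \<bullet> v i0)^2 *\<^sub>R x"
    and pp: "mp X2 x \<bullet> mp X2 x = (u i0 \<bullet> v i0)^2 * (x \<bullet> x)"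
    using tp.tight[OF pv' i0r one lt] by blast
  define y1' where "y1' = X1 *v (- x)"
  define y2' where "y2' = X2 *v (- x)"
  have inS: "in_S2 X1 y1' X2 y2'"
    using S nx unfolding in_S2_def is_task_def y1'_def y2'_def
    by (intro conjI exI[of _ "- x"]) auto
  have wst': "wstar X1 y1' X2 y2' = - x"
    by (rule wstar_char) (use xM in \<open>auto simp: y1'_def y2'_def\<close>)
  define g where "g t = cyc_iter X1 y1' X2 y2' t - (- x)" for t
  have stg: "g (Suc t) = (if t mod 2 = 0 then mp X1 (g t) else mp X2 (g t))" for t
    unfolding g_def by (rule cyc_err) (simp_all add: y1'_def y2'_def)
  have g0: "g 0 = x" by (simp add: g_def)
  have gt: "g (Suc (Suc (2*k))) = ((u i0 \<bullet> v i0)^2)^k *\<^sub>R mp X2 x"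
    using iter_tight[OF stg tp.lin1 tp.lin2 g0 p1x p12x] by blast
  have c2: "c^2 = (u i0 \<bullet> v i0)^2" by (simp add: c_def)
  have part2: "(norm (g (Suc (Suc (2*k)))))^2 = (c^2)^(Suc (2*k)) * (norm x)^2"
  proof -
    have "(norm (g (Suc (Suc (2*k)))))^2 = (((c^2)^k)^2) * (mp X2 x \<bullet> mp X2 x)"
      unfolding gt c2 by (simp add: power2_norm_eq_inner[symmetric] power_mult_distrib)
    also have "\<dots> = (c^2)^(Suc (2*k)) * (norm x)^2"
      unfolding pp c2[symmetric] by (simp add: power2_norm_eq_inner power_mult[symmetric] algebra_simps)
    finally show ?thesis .
  qed
  show ?thesis
  proof
    show "(norm (cyc_iter X1 y1 X2 y2 (2*n) - wstar X1 y1 X2 y2))\<^sup>2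
           \<le> ((cos \<theta>F)\<^sup>2) ^ (2*n - 1) * (norm (wstar X1 y1 X2 y2))\<^sup>2"
      using part1 unfolding wst n2 cosF f_def by simp
    show "\<exists>y1' y2'. in_S2 X1 y1' X2 y2' \<and> wstar X1 y1' X2 y2' \<noteq> 0 \<and>
           (norm (cyc_iter X1 y1' X2 y2' (2*n) - wstar X1 y1' X2 y2'))\<^sup>2
             = ((cos \<theta>F)\<^sup>2) ^ (2*n - 1) * (norm (wstar X1 y1' X2 y2'))\<^sup>2"
      using inS x0 part2 unfolding n2 cosF g_def
      by (intro exI[of _ y1'] exI[of _ y2']) (simp add: wst')
  qed
qed


end
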